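(* Let $N,M\ge 1$, $1\le Q\le N$, and let $\mathbf{P}\in\mathbb{C}^{N\times Q}$ be deterministic with unit-norm rows. Let $\mathbf{x}\in\mathbb{C}^{N}$ be a random input with an arbitrary distribution, independent of everything else. Let $\mathbf{Y}=\mathbf{S}\mathbf{P}^{T}\mathrm{diag}\{\mathbf{x}\}+\mathbf{W}$ with $\mathbf{S}\in\mathbb{C}^{M\times Q}$ and $\mathbf{W}\in\mathbb{C}^{M\times N}$ having i.i.d. $\mathcal{CN}(0,1)$ entries. Let $\mathbf{Y}'=\mathbf{s}'\mathbf{x}^{T}+\mathbf{W}'$, where $\mathbf{s}'\sim\mathcal{CN}(\mathbf{0},\mathbf{I}_{QM})$ and $\mathbf{W}'\in\mathbb{C}^{QM\times N}$ has i.i.d. $\mathcal{CN}(0,1)$ entries, with $\mathbf{x},\mathbf{s}',\mathbf{W}'$ independent. Then $I(\mathbf{x};\mathbf{Y})\le I(\mathbf{x};\mathbf{Y}')$. Consequently, for every $\rho>0$, the capacity under the constraint $\mathbb{E}[\|\mathbf{x}\|^2]\le N\rho$ of the first channel (rank $Q$, $M$ receive antennas) is at most the capacity under the same constraint of the second channel (rank $1$, $QM$ receive antennas). *)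

theory Defs
  imports "HOL-Probability.Probability"
begin

definition cgauss :: "complex measure" where
  "cgauss = density lborel (\<lambda>z. ennreal (exp (- (cmod z)\<^sup>2) / pi))"

definition iid_cgauss_vec :: "(complex ^ 'i::finite) measure" where
  "iid_cgauss_vec = distr (\<Pi>\<^sub>M i\<in>UNIV. cgauss) borel (\<lambda>f. \<chi> i. f i)"

definition iid_cgauss_mat :: "(complex ^ 'c::finite ^ 'r::finite) measure" where
  "iid_cgauss_mat = distr (\<Pi>\<^sub>M ij\<in>UNIV. cgauss) borel (\<lambda>f. \<chi> i j. f (i, j))"

definition diag_mat :: "complex ^ 'n::finite \<Rightarrow> complex ^ 'n ^ 'n" where
  "diag_mat x = (\<chi> i j. if i = j then x $ i else 0)"

text \<open>Kullback-Leibler divergence D(P || Q) in nats, valued in [0, infinity]: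
  infinite unless P is absolutely continuous w.r.t. Q; otherwise, with f = dP/dQ,
  D = integral of f ln f dQ, written as the integral of the nonnegative
  f ln f - f + 1 (equal since both are probability measures; 0 ln 0 = 0).\<close>
definition KL_div :: "'a measure \<Rightarrow> 'a measure \<Rightarrow> ennreal" where
  "KL_div P Q =
    (if absolutely_continuous Q P then
       \<integral>\<^sup>+ \<omega>. ennreal (let f = enn2real (RN_deriv Q P \<omega>) in
                        if f = 0 then 1 else f * ln f - f + 1) \<partial>Q
     else \<infinity>)"

definition mutual_info :: "('a::topological_space \<times> 'b::topological_space) measure \<Rightarrow> ennreal" where
  "mutual_info J = KL_div J (distr J borel fst \<Otimes>\<^sub>M distr J borel snd)"

definition channel1 :: "complex ^ 'q::finite ^ 'n::finite \<Rightarrow> (complex ^ 'n) measure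
     \<Rightarrow> ((complex ^ 'n) \<times> (complex ^ 'n ^ 'm::finite)) measure" where
  "channel1 P \<mu> =
     distr (\<mu> \<Otimes>\<^sub>M ((iid_cgauss_mat :: (complex ^ 'q ^ 'm) measure) \<Otimes>\<^sub>M
                    (iid_cgauss_mat :: (complex ^ 'n ^ 'm) measure)))
       (borel \<Otimes>\<^sub>M borel)
       (\<lambda>(x, S, W). (x, S ** transpose P ** diag_mat x + W))"

text \<open>Channel 2: Y' = s' x^T + W', s' (QM) ~ CN(0, I), W' (QM x N) i.i.d. CN(0,1),
  x ~ mu, all independent (rows indexed by 'q x 'm, so QM of them).\<close>
definition channel2 :: "(complex ^ 'n::finite) measure
     \<Rightarrow> ((complex ^ 'n) \<times> (complex ^ 'n ^ ('q::finite \<times> 'm::finite))) measure" where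
  "channel2 \<mu> =
     distr (\<mu> \<Otimes>\<^sub>M ((iid_cgauss_vec :: (complex ^ ('q \<times> 'm)) measure) \<Otimes>\<^sub>M
                    (iid_cgauss_mat :: (complex ^ 'n ^ ('q \<times> 'm)) measure)))
       (borel \<Otimes>\<^sub>M borel)
       (\<lambda>(x, s, W). (x, (\<chi> r c. s $ r * x $ c) + W))"

definition input_law :: "(complex ^ 'n::finite) measure \<Rightarrow> bool" where
  "input_law \<mu> \<longleftrightarrow> prob_space \<mu> \<and> sets \<mu> = sets (borel :: (complex ^ 'n) measure)"

definition capacity :: "((complex ^ 'n::finite) measure \<Rightarrow> ((complex ^ 'n) \<times> 'y::topological_space) measure)
     \<Rightarrow> real \<Rightarrow> ennreal" where
  "capacity ch \<rho> =
     (SUP \<mu> \<in> {\<mu>. input_law \<mu> \<and>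
                 (\<integral>\<^sup>+ x. ennreal ((norm x)\<^sup>2) \<partial>\<mu>) \<le> ennreal (real CARD('n) * \<rho>)}.
        mutual_info (ch \<mu>))"

end

theory Submission
  imports Defs
begin


definition phi :: "real \<Rightarrow> real" where "phi t = t * ln t - t + 1"

lemma phi_tangent: assumes "t \<ge> 0" "c > 0" shows "1 - c + t * ln c \<le> phi t"
proof (cases "t = 0")
  case True then show ?thesis using assms by (simp add: phi_def)
next
  case False
  then have tp: "t > 0" using assms by auto
  have "ln (c / t) \<le> c / t - 1" using assms tp by (intro ln_le_minus_one) auto
  then have "t * ln (c / t) \<le> t * (c / t - 1)" using tp by (intro mult_left_mono) auto
  then have "t * ln c - t * ln t \<le> c - t" using tp assms by (simp add: ln_div algebra_simps)
  then show ?thesis by (simp add: phi_def)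
qed

lemma phi_nonneg: "t \<ge> 0 \<Longrightarrow> phi t \<ge> 0"
  using phi_tangent[of t 1] by simp

lemma phi_sup:
  fixes g y :: real
  assumes g: "g \<ge> 0" and H: "\<And>c. c \<in> \<rat> \<Longrightarrow> c > 0 \<Longrightarrow> 1 - c + g * ln c \<le> y"
  shows "phi g \<le> y"
proof (rule ccontr)
  assume "\<not> phi g \<le> y"
  then have lt: "y < phi g" by simp
  show False
  proof (cases "g = 0")
    case True
    then have "y < 1" using lt by (simp add: phi_def)
    then obtain c where c: "c \<in> \<rat>" "0 < c" "c < 1 - y" using Rats_dense_in_real[of 0 "1 - y"] by auto
    then show False using H[OF c(1,2)] True by simp
  next
    case False
    then have gp: "g > 0" using g by simp
    have "isCont (\<lambda>c. 1 - c + g * ln c) g" using gp by (intro continuous_intros) auto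
    moreover have "1 - g + g * ln g = phi g" by (simp add: phi_def)
    ultimately have "((\<lambda>c. 1 - c + g * ln c) \<longlongrightarrow> phi g) (at g)"
      by (simp add: isCont_def)
    then have "eventually (\<lambda>c. y < 1 - c + g * ln c) (at g)"
      using lt by (rule order_tendstoD)
    then obtain d where d: "d > 0" "\<And>c. c \<noteq> g \<Longrightarrow> dist c g < d \<Longrightarrow> y < 1 - c + g * ln c"
      unfolding eventually_at by auto
    obtain c where c: "c \<in> \<rat>" "g < c" "c < g + d" using Rats_dense_in_real[of g "g + d"] d by auto
    have "y < 1 - c + g * ln c" using c d by (intro d(2)) (auto simp: dist_real_def)
    then show False using H[OF c(1)] c gp by force
  qed
qed

lemma KL_div_phi: "KL_div P Q = (if absolutely_continuous Q P then
       \<integral>\<^sup>+ \<omega>. ennreal (phi (enn2real (RN_deriv Q P \<omega>))) \<partial>Q else \<infinity>)"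
proof -
  have "\<And>f::real. (if f = 0 then 1 else f * ln f - f + 1) = phi f" by (simp add: phi_def)
  then show ?thesis unfolding KL_div_def Let_def by simp
qed

lemma borel_measurable_phi[measurable]: "phi \<in> borel_measurable borel"
  unfolding phi_def by measurable

lemma set_integral_RN:
  assumes M: "sigma_finite_measure M" and ac: "absolutely_continuous M N" and sN: "sets N = sets M"
    and N: "finite_measure N" and A: "A \<in> sets M"
  shows "(\<integral>x\<in>A. enn2real (RN_deriv M N x) \<partial>M) = measure N A"
proof -
  interpret M: sigma_finite_measure M by fact
  interpret N: finite_measure N by fact
  have fin: "AE x in M. RN_deriv M N x \<noteq> \<infinity>"
    by (rule M.RN_deriv_finite[OF _ ac sN]) (simp add: N.sigma_finite_measure_axioms)
  have "(\<integral>\<^sup>+x. ennreal (indicator A x * enn2real (RN_deriv M N x)) \<partial>M) = (\<integral>\<^sup>+x. RN_deriv M N x * indicator A x \<partial>M)"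
    using fin by (intro nn_integral_cong_AE) (auto simp: indicator_def ennreal_enn2real_if less_top)
  also have "\<dots> = emeasure (density M (RN_deriv M N)) A"
    using A by (simp add: emeasure_density)
  also have "\<dots> = emeasure N A"
    using M.density_RN_deriv[OF ac sN] by simp
  finally have eq: "(\<integral>\<^sup>+x. ennreal (indicator A x * enn2real (RN_deriv M N x)) \<partial>M) = emeasure N A" .
  have "(\<integral>x\<in>A. enn2real (RN_deriv M N x) \<partial>M) = (\<integral>x. indicator A x * enn2real (RN_deriv M N x) \<partial>M)"
    by (simp add: set_lebesgue_integral_def)
  also have "\<dots> = enn2real (\<integral>\<^sup>+x. ennreal (indicator A x * enn2real (RN_deriv M N x)) \<partial>M)"
    using A by (intro integral_eq_nn_integral) auto
  also have "\<dots> = measure N A" using eq by (simp add: measure_def)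
  finally show ?thesis .
qed

lemma nn_integral_RN_le:
  assumes ac: "absolutely_continuous M N" and sN: "sets N = sets M"
    and M: "sigma_finite_measure M"
  shows "(\<integral>\<^sup>+x. ennreal (enn2real (RN_deriv M N x)) \<partial>M) \<le> emeasure N (space N)"
proof -
  interpret M: sigma_finite_measure M by fact
  have "(\<integral>\<^sup>+x. ennreal (enn2real (RN_deriv M N x)) \<partial>M) \<le> (\<integral>\<^sup>+x. RN_deriv M N x \<partial>M)"
    by (intro nn_integral_mono) (simp add: ennreal_enn2real_if)
  also have "\<dots> = emeasure (density M (RN_deriv M N)) (space M)"
    by (simp add: emeasure_density)
  also have "\<dots> = emeasure N (space N)"
    using M.density_RN_deriv[OF ac sN] sets_eq_imp_space_eq[OF sN] by simp
  finally show ?thesis .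
qed

lemma kl_dpi:
  assumes Q: "prob_space Q" and Pm: "prob_space Pm" and sPQ: "sets Pm = sets Q"
    and F[measurable]: "F \<in> measurable Q N"
  shows "KL_div (distr Pm N F) (distr Q N F) \<le> KL_div Pm Q"
proof (cases "absolutely_continuous Q Pm")
  case False then show ?thesis by (simp add: KL_div_def)
next
  case ac: True
  interpret Q: prob_space Q by fact
  interpret P: prob_space Pm by fact
  define Q' where "Q' = distr Q N F"
  define P' where "P' = distr Pm N F"
  have spPQ: "space Pm = space Q" using sets_eq_imp_space_eq[OF sPQ] .
  have F': "F \<in> measurable Pm N" using F by (simp add: measurable_cong_sets[OF sPQ refl])
  interpret Q': prob_space Q' unfolding Q'_def by (rule Q.prob_space_distr[OF F])
  interpret P': prob_space P' unfolding P'_def by (rule P.prob_space_distr[OF F'])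
  have sP': "sets P' = sets Q'" by (simp add: P'_def Q'_def)
  have ac': "absolutely_continuous Q' P'"
    unfolding absolutely_continuous_def
  proof
    fix B assume "B \<in> null_sets Q'"
    then have "F -` B \<inter> space Q \<in> null_sets Q" "B \<in> sets N"
      using null_sets_distr_iff[OF F] by (auto simp: Q'_def)
    then have "F -` B \<inter> space Pm \<in> null_sets Pm"
      using ac spPQ unfolding absolutely_continuous_def by auto
    then show "B \<in> null_sets P'"
      using null_sets_distr_iff[OF F'] \<open>B \<in> sets N\<close> by (auto simp: P'_def)
  qed
  define h where "h = RN_deriv Q Pm"
  define hr where "hr = (\<lambda>x. enn2real (h x))"
  define h' where "h' = RN_deriv Q' P'"
  define g where "g = (\<lambda>x. enn2real (h' (F x)))"
  have [measurable]: "h \<in> borel_measurable Q" unfolding h_def by simp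
  have [measurable]: "h' \<in> borel_measurable Q'" unfolding h'_def by simp
  then have h'N[measurable]: "h' \<in> borel_measurable N" by (simp add: Q'_def)
  have [measurable]: "hr \<in> borel_measurable Q" unfolding hr_def by simp
  have [measurable]: "g \<in> borel_measurable Q" unfolding g_def by measurable
  have KL1: "KL_div Pm Q = (\<integral>\<^sup>+x. ennreal (phi (hr x)) \<partial>Q)"
    using ac by (simp add: KL_div_phi hr_def h_def)
  have "KL_div P' Q' = (\<integral>\<^sup>+y. ennreal (phi (enn2real (h' y))) \<partial>Q')"
    using ac' by (simp add: KL_div_phi h'_def)
  also have "\<dots> = (\<integral>\<^sup>+x. ennreal (phi (g x)) \<partial>Q)"
    unfolding Q'_def g_def by (subst nn_integral_distr) (auto)
  finally have KL2: "KL_div P' Q' = (\<integral>\<^sup>+x. ennreal (phi (g x)) \<partial>Q)" .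
  show ?thesis
  proof (cases "(\<integral>\<^sup>+x. ennreal (phi (hr x)) \<partial>Q) = \<infinity>")
    case True then show ?thesis using KL1 by simp
  next
    case False
    have hr0: "\<And>x. hr x \<ge> 0" "\<And>x. g x \<ge> 0" by (auto simp: hr_def g_def)
    have int_phih: "integrable Q (\<lambda>x. phi (hr x))"
      using False hr0 by (intro integrableI_nonneg) (auto simp: phi_nonneg less_top)
    have int_hr: "integrable Q hr"
    proof (intro integrableI_nonneg)
      have "(\<integral>\<^sup>+x. ennreal (hr x) \<partial>Q) \<le> emeasure Pm (space Pm)"
        unfolding hr_def h_def using ac sPQ Q.sigma_finite_measure_axioms by (rule nn_integral_RN_le)
      then show "(\<integral>\<^sup>+x. ennreal (hr x) \<partial>Q) < \<infinity>" using P.emeasure_space_1 by (simp add: le_less_trans[OF _ ennreal_one_less_top])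
    qed (auto simp: hr0)
    have int_g: "integrable Q g"
    proof (intro integrableI_nonneg)
      have "(\<integral>\<^sup>+x. ennreal (g x) \<partial>Q) = (\<integral>\<^sup>+y. ennreal (enn2real (h' y)) \<partial>Q')"
        unfolding Q'_def g_def by (subst nn_integral_distr) auto
      also have "\<dots> \<le> emeasure P' (space P')"
        unfolding h'_def using ac' sP' Q'.sigma_finite_measure_axioms by (rule nn_integral_RN_le)
      finally show "(\<integral>\<^sup>+x. ennreal (g x) \<partial>Q) < \<infinity>" using P'.emeasure_space_1 by (simp add: le_less_trans[OF _ ennreal_one_less_top])
    qed (auto simp: hr0)
    define G where "G = vimage_algebra (space Q) F N"
    have subalg: "subalgebra Q G"
      unfolding subalgebra_def G_def using sets_image_in_sets[OF refl F] by simp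
    interpret S: finite_measure_subalgebra Q G
      by unfold_locales (rule subalg)
    have FG: "F \<in> measurable G N"
      unfolding G_def using measurable_space[OF F] by (intro measurable_vimage_algebra1) auto
    have gG[measurable]: "g \<in> borel_measurable G"
      unfolding g_def using FG h'N by measurable
    have charact: "AE x in Q. real_cond_exp Q G hr x = g x"
    proof (rule S.real_cond_exp_charact)
      fix A assume "A \<in> sets G"
      then obtain B where B: "B \<in> sets N" "A = F -` B \<inter> space Q"
        unfolding G_def using sets_vimage_algebra2[of F "space Q" N] measurable_space[OF F] by auto
      have AQ: "A \<in> sets Q" using B by simp
      have "(\<integral>x\<in>A. hr x \<partial>Q) = measure Pm A"
        unfolding hr_def h_def using Q.sigma_finite_measure_axioms ac sPQ P.finite_measure_axioms AQ
        by (rule set_integral_RN)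
      also have "\<dots> = measure P' B"
        using B spPQ by (simp add: P'_def measure_distr[OF F'])
      also have "\<dots> = (\<integral>y\<in>B. enn2real (h' y) \<partial>Q')"
        unfolding h'_def using Q'.sigma_finite_measure_axioms ac' sP' P'.finite_measure_axioms B(1)
        by (intro set_integral_RN[symmetric]) (auto simp: Q'_def)
      also have "\<dots> = (\<integral>x. indicator B (F x) * g x \<partial>Q)"
      proof -
        have [measurable]: "B \<in> sets N" using B by simp
        have "(\<lambda>x. indicator B x * enn2real (h' x)) \<in> borel_measurable N" by measurable
        then show ?thesis
          unfolding set_lebesgue_integral_def Q'_def g_def
          by (subst integral_distr[OF F]) auto
      qed
      also have "\<dots> = (\<integral>x\<in>A. g x \<partial>Q)"
        unfolding set_lebesgue_integral_def B(2)
        by (intro Bochner_Integration.integral_cong) (auto simp: indicator_def)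
      finally show "(\<integral>x\<in>A. hr x \<partial>Q) = (\<integral>x\<in>A. g x \<partial>Q)" .
    qed (auto simp: int_hr int_g)
    have "\<forall>c\<in>\<rat> \<inter> {0<..}. AE x in Q. 1 - c + g x * ln c \<le> real_cond_exp Q G (\<lambda>x. phi (hr x)) x"
    proof
      fix c :: real assume "c \<in> \<rat> \<inter> {0<..}"
      then have c: "c > 0" by auto
      have int_l: "integrable Q (\<lambda>x. (1 - c) + ln c * hr x)" using int_hr by auto
      have m: "AE x in Q. real_cond_exp Q G (\<lambda>x. (1 - c) + ln c * hr x) x \<le> real_cond_exp Q G (\<lambda>x. phi (hr x)) x"
        using int_l int_phih phi_tangent[OF hr0(1) c]
        by (intro S.real_cond_exp_mono) (auto simp: algebra_simps)
      have a: "AE x in Q. real_cond_exp Q G (\<lambda>x. (1 - c) + ln c * hr x) x = real_cond_exp Q G (\<lambda>x. 1 - c) x + real_cond_exp Q G (\<lambda>x. ln c * hr x) x"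
        using int_hr by (intro S.real_cond_exp_add) auto
      have b: "AE x in Q. real_cond_exp Q G (\<lambda>x. 1 - c) x = 1 - c"
        by (intro S.real_cond_exp_F_meas) auto
      have d: "AE x in Q. real_cond_exp Q G (\<lambda>x. ln c * hr x) x = ln c * real_cond_exp Q G hr x"
        using int_hr by (intro S.real_cond_exp_cmult)
      show "AE x in Q. 1 - c + g x * ln c \<le> real_cond_exp Q G (\<lambda>x. phi (hr x)) x"
        using m a b d charact by eventually_elim (simp add: algebra_simps)
    qed
    then have "AE x in Q. \<forall>c\<in>\<rat> \<inter> {0<..}. 1 - c + g x * ln c \<le> real_cond_exp Q G (\<lambda>x. phi (hr x)) x"
      by (subst AE_ball_countable) (auto intro: countable_rat)
    then have ae: "AE x in Q. phi (g x) \<le> real_cond_exp Q G (\<lambda>x. phi (hr x)) x"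
    proof eventually_elim
      case (elim x)
      show ?case by (rule phi_sup[OF hr0(2)]) (use elim in auto)
    qed
    have intE: "integrable Q (real_cond_exp Q G (\<lambda>x. phi (hr x)))"
      using int_phih by (rule S.real_cond_exp_int(1))
    have int_phig: "integrable Q (\<lambda>x. phi (g x))"
    proof (rule Bochner_Integration.integrable_bound[OF intE])
      show "AE x in Q. norm (phi (g x)) \<le> norm (real_cond_exp Q G (\<lambda>x. phi (hr x)) x)"
        using ae
      proof eventually_elim
        case (elim x)
        have "0 \<le> phi (g x)" by (rule phi_nonneg[OF hr0(2)])
        then show ?case using elim by simp
      qed
    qed simp
    have "(\<integral>x. phi (g x) \<partial>Q) \<le> (\<integral>x. real_cond_exp Q G (\<lambda>x. phi (hr x)) x \<partial>Q)"
      using ae int_phig intE by (intro integral_mono_AE) auto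
    also have "\<dots> = (\<integral>x. phi (hr x) \<partial>Q)"
      using int_phih by (rule S.real_cond_exp_int(2))
    finally have le: "(\<integral>x. phi (g x) \<partial>Q) \<le> (\<integral>x. phi (hr x) \<partial>Q)" .
    have "(\<integral>\<^sup>+x. ennreal (phi (g x)) \<partial>Q) = ennreal (\<integral>x. phi (g x) \<partial>Q)"
      using int_phig by (intro nn_integral_eq_integral) (auto simp: phi_nonneg hr0)
    also have "\<dots> \<le> ennreal (\<integral>x. phi (hr x) \<partial>Q)" using le by (rule ennreal_leI)
    also have "\<dots> = (\<integral>\<^sup>+x. ennreal (phi (hr x)) \<partial>Q)"
      using int_phih by (intro nn_integral_eq_integral[symmetric]) (auto simp: phi_nonneg hr0)
    finally show ?thesis using KL1 KL2 by (simp add: P'_def Q'_def)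
  qed
qed

lemma mi_dpi:
  fixes J :: "('a::topological_space \<times> 'b::topological_space) measure"
    and f :: "'b \<Rightarrow> 'c::topological_space"
  assumes J: "prob_space J" and sJ: "sets J = sets (borel \<Otimes>\<^sub>M borel)"
    and f[measurable]: "f \<in> borel_measurable borel"
  shows "mutual_info (distr J (borel \<Otimes>\<^sub>M borel) (\<lambda>(x, y). (x, f y))) \<le> mutual_info J"
proof -
  interpret J: prob_space J by fact
  define F where "F = (\<lambda>(x::'a, y::'b). (x, f y))"
  have Fm: "F \<in> measurable (borel \<Otimes>\<^sub>M borel) (borel \<Otimes>\<^sub>M (borel :: 'c measure))"
    unfolding F_def by measurable
  have FJ: "F \<in> measurable J (borel \<Otimes>\<^sub>M borel)"
    using Fm by (simp add: measurable_cong_sets[OF sJ refl])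
  have fstJ: "fst \<in> measurable J borel" and sndJ: "snd \<in> measurable J borel"
    by (simp_all add: measurable_cong_sets[OF sJ refl])
  define J1 where "J1 = distr J borel fst"
  define J2 where "J2 = distr J borel snd"
  interpret J1: prob_space J1 unfolding J1_def by (rule J.prob_space_distr[OF fstJ])
  interpret J2: prob_space J2 unfolding J2_def by (rule J.prob_space_distr[OF sndJ])
  have fJ2: "f \<in> measurable J2 borel" by (simp add: J2_def)
  interpret J2': prob_space "distr J2 borel f" by (rule J2.prob_space_distr[OF fJ2])
  define Q where "Q = J1 \<Otimes>\<^sub>M J2"
  interpret Q: prob_space Q unfolding Q_def by (rule prob_space_pair) (unfold_locales)
  have sQ: "sets Q = sets (borel \<Otimes>\<^sub>M borel)" unfolding Q_def J1_def J2_def by (intro sets_pair_measure_cong) auto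
  have FQ: "F \<in> measurable Q (borel \<Otimes>\<^sub>M borel)"
    using Fm by (simp add: measurable_cong_sets[OF sQ refl])
  have m1: "distr (distr J (borel \<Otimes>\<^sub>M borel) F) borel fst = J1"
    unfolding J1_def using FJ by (subst distr_distr) (auto simp: F_def comp_def split_beta)
  have m2: "distr (distr J (borel \<Otimes>\<^sub>M borel) F) borel snd = distr J2 borel f"
    unfolding J2_def using FJ sndJ by (subst distr_distr, simp, simp, subst distr_distr) (auto simp: F_def comp_def split_beta)
  have pr: "distr J1 borel (\<lambda>x. x) \<Otimes>\<^sub>M distr J2 borel f = distr Q (borel \<Otimes>\<^sub>M borel) F"
    unfolding Q_def F_def
    by (rule pair_measure_distr) (auto simp: J1_def fJ2 J2'.sigma_finite_measure_axioms)
  have "distr J1 borel (\<lambda>x. x) = J1" by (rule distr_id2) (simp add: J1_def)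
  with pr have pr': "J1 \<Otimes>\<^sub>M distr J2 borel f = distr Q (borel \<Otimes>\<^sub>M borel) F" by simp
  have "mutual_info (distr J (borel \<Otimes>\<^sub>M borel) F) = KL_div (distr J (borel \<Otimes>\<^sub>M borel) F) (distr Q (borel \<Otimes>\<^sub>M borel) F)"
    unfolding mutual_info_def m1 m2 pr' ..
  also have "\<dots> \<le> KL_div J Q"
    by (rule kl_dpi[OF Q.prob_space_axioms J]) (auto simp: sJ sQ FQ)
  also have "\<dots> = mutual_info J" by (simp add: mutual_info_def Q_def J1_def J2_def)
  finally show ?thesis by (simp add: F_def)
qed


lemma sets_cgauss[measurable_cong, simp]: "sets cgauss = sets borel"
  by (simp add: cgauss_def)

lemma space_cgauss[simp]: "space cgauss = UNIV"
  by (simp add: cgauss_def)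

lemma complex_measurable: "(\<lambda>(x, y). Complex x y) \<in> measurable (lborel \<Otimes>\<^sub>M lborel) (borel :: complex measure)"
proof -
  have "(\<lambda>(x, y). Complex x y) = (\<lambda>p. complex_of_real (fst p) + \<i> * complex_of_real (snd p))"
    by (auto simp: complex_eq_iff)
  moreover have "(\<lambda>p. complex_of_real (fst p) + \<i> * complex_of_real (snd p)) \<in> measurable (lborel \<Otimes>\<^sub>M lborel) (borel :: complex measure)"
    by measurable
  ultimately show ?thesis by simp
qed

lemma lborel_complex: "distr (lborel \<Otimes>\<^sub>M lborel) borel (\<lambda>(x, y). Complex x y) = (lborel :: complex measure)"
proof (rule lborel_eqI[symmetric])
  fix l u :: complex
  assume le: "\<And>b. b \<in> Basis \<Longrightarrow> l \<bullet> b \<le> u \<bullet> b"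
  then have le1: "Re l \<le> Re u" and le2: "Im l \<le> Im u"
    using le[of 1] le[of \<i>] by (auto simp: Basis_complex_def)
  have m: "(\<lambda>(x, y). Complex x y) \<in> measurable (lborel \<Otimes>\<^sub>M lborel) (borel :: complex measure)"
    using complex_measurable .
  have pre: "(\<lambda>(x, y). Complex x y) -` box l u \<inter> space (lborel \<Otimes>\<^sub>M lborel) = {Re l <..< Re u} \<times> {Im l <..< Im u}"
    by (auto simp: box_def Basis_complex_def space_pair_measure)
  have "emeasure (distr (lborel \<Otimes>\<^sub>M lborel) borel (\<lambda>(x, y). Complex x y)) (box l u)
      = emeasure (lborel \<Otimes>\<^sub>M lborel) ({Re l <..< Re u} \<times> {Im l <..< Im u})"
    using m by (simp add: emeasure_distr pre)
  also have "\<dots> = ennreal (Re u - Re l) * ennreal (Im u - Im l)"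
    using le1 le2 by (simp add: lborel.emeasure_pair_measure_Times)
  also have "\<dots> = (\<Prod>b\<in>Basis. (u - l) \<bullet> b)"
    using le1 le2 by (simp add: Basis_complex_def ennreal_mult' inner_complex_def)
  finally show "emeasure (distr (lborel \<Otimes>\<^sub>M lborel) borel (\<lambda>(x, y). Complex x y)) (box l u) = (\<Prod>b\<in>Basis. (u - l) \<bullet> b)" .
qed simp

lemma nn_integral_complex:
  fixes f :: "complex \<Rightarrow> ennreal"
  assumes [measurable]: "f \<in> borel_measurable borel"
  shows "(\<integral>\<^sup>+z. f z \<partial>lborel) = (\<integral>\<^sup>+p. f (Complex (fst p) (snd p)) \<partial>(lborel \<Otimes>\<^sub>M lborel))"
proof -
  note m = complex_measurable
  show ?thesis
    by (subst lborel_complex[symmetric], subst nn_integral_distr[OF m]) (auto simp: split_beta)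
qed

lemma nn_integral_translate:
  fixes h :: "'a::euclidean_space \<Rightarrow> ennreal"
  assumes [measurable]: "h \<in> borel_measurable borel"
  shows "(\<integral>\<^sup>+x. h (t + x) \<partial>lborel) = (\<integral>\<^sup>+x. h x \<partial>lborel)"
proof -
  have "lborel = density (distr lborel borel (\<lambda>x. t + 1 *\<^sub>R x)) (\<lambda>_. \<bar>1::real\<bar>^DIM('a))"
    by (rule lborel_affine) simp
  then have "lborel = distr lborel borel (\<lambda>x::'a. t + x)" by (simp add: density_1)
  then have "(\<integral>\<^sup>+x. h x \<partial>lborel) = (\<integral>\<^sup>+x. h x \<partial>distr lborel borel (\<lambda>x::'a. t + x))"
    by simp
  also have "\<dots> = (\<integral>\<^sup>+x. h (t + x) \<partial>lborel)"
    by (subst nn_integral_distr) (auto)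
  finally show ?thesis ..
qed

lemma meas_pair_lborel:
  assumes "F \<in> borel_measurable borel"
  shows "F \<in> borel_measurable ((lborel :: 'a::euclidean_space measure) \<Otimes>\<^sub>M (lborel :: 'a measure))"
proof -
  have "sets ((lborel :: 'a measure) \<Otimes>\<^sub>M (lborel :: 'a measure)) = sets (borel :: ('a \<times> 'a) measure)"
  proof -
    have "lborel \<Otimes>\<^sub>M lborel = (lborel :: ('a \<times> 'a) measure)" by (rule lborel_prod)
    then have "sets (lborel \<Otimes>\<^sub>M lborel) = sets (lborel :: ('a \<times> 'a) measure)" by (rule arg_cong)
    then show ?thesis by (rule trans[OF _ sets_lborel])
  qed
  then have eq: "borel_measurable ((lborel :: 'a measure) \<Otimes>\<^sub>M (lborel :: 'a measure)) = borel_measurable borel"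
    by (rule measurable_cong_sets[OF _ refl])
  show ?thesis unfolding eq by (rule assms)
qed

lemma shear1:
  fixes F :: "'a::euclidean_space \<times> 'a \<Rightarrow> ennreal"
  assumes [measurable]: "F \<in> borel_measurable borel"
  shows "(\<integral>\<^sup>+p. F (fst p + a *\<^sub>R snd p, snd p) \<partial>(lborel \<Otimes>\<^sub>M lborel)) = (\<integral>\<^sup>+p. F p \<partial>(lborel \<Otimes>\<^sub>M lborel))"
proof -
  note [measurable] = meas_pair_lborel[OF assms]
  have "(\<integral>\<^sup>+p. F (fst p + a *\<^sub>R snd p, snd p) \<partial>(lborel \<Otimes>\<^sub>M lborel))
      = (\<integral>\<^sup>+y. \<integral>\<^sup>+x. F (x + a *\<^sub>R y, y) \<partial>lborel \<partial>lborel)"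
    by (subst lborel_pair.nn_integral_snd[symmetric]) (auto)
  also have "\<dots> = (\<integral>\<^sup>+y. \<integral>\<^sup>+x. F (x, y) \<partial>lborel \<partial>lborel)"
  proof -
    have eq: "(\<integral>\<^sup>+x. F (x + a *\<^sub>R y, y) \<partial>lborel) = (\<integral>\<^sup>+x. F (x, y) \<partial>lborel)" for y :: 'a
      using nn_integral_translate[of "\<lambda>x. F (x, y)" "a *\<^sub>R y"] by (simp add: add.commute)
    show ?thesis by (simp add: eq)
  qed
  also have "\<dots> = (\<integral>\<^sup>+p. F p \<partial>(lborel \<Otimes>\<^sub>M lborel))"
    by (subst lborel_pair.nn_integral_snd) (auto)
  finally show ?thesis .
qed

lemma shear2:
  fixes F :: "'a::euclidean_space \<times> 'a \<Rightarrow> ennreal"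
  assumes [measurable]: "F \<in> borel_measurable borel"
  shows "(\<integral>\<^sup>+p. F (fst p, snd p + a *\<^sub>R fst p) \<partial>(lborel \<Otimes>\<^sub>M lborel)) = (\<integral>\<^sup>+p. F p \<partial>(lborel \<Otimes>\<^sub>M lborel))"
proof -
  note [measurable] = meas_pair_lborel[OF assms]
  have "(\<integral>\<^sup>+p. F (fst p, snd p + a *\<^sub>R fst p) \<partial>(lborel \<Otimes>\<^sub>M lborel))
      = (\<integral>\<^sup>+x. \<integral>\<^sup>+y. F (x, y + a *\<^sub>R x) \<partial>lborel \<partial>lborel)"
    by (subst lborel.nn_integral_fst[symmetric]) (auto)
  also have "\<dots> = (\<integral>\<^sup>+x. \<integral>\<^sup>+y. F (x, y) \<partial>lborel \<partial>lborel)"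
  proof -
    have eq: "(\<integral>\<^sup>+y. F (x, y + a *\<^sub>R x) \<partial>lborel) = (\<integral>\<^sup>+y. F (x, y) \<partial>lborel)" for x :: 'a
      using nn_integral_translate[of "\<lambda>y. F (x, y)" "a *\<^sub>R x"] by (simp add: add.commute)
    show ?thesis by (simp add: eq)
  qed
  also have "\<dots> = (\<integral>\<^sup>+p. F p \<partial>(lborel \<Otimes>\<^sub>M lborel))"
    by (subst lborel.nn_integral_fst) (auto)
  finally show ?thesis .
qed

lemma rot_inv:
  fixes F :: "'a::euclidean_space \<times> 'a \<Rightarrow> ennreal" and c s :: real
  assumes [measurable]: "F \<in> borel_measurable borel" and cs: "c\<^sup>2 + s\<^sup>2 = 1" "c \<noteq> -1"
  shows "(\<integral>\<^sup>+p. F (c *\<^sub>R fst p - s *\<^sub>R snd p, s *\<^sub>R fst p + c *\<^sub>R snd p) \<partial>(lborel \<Otimes>\<^sub>M lborel))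
       = (\<integral>\<^sup>+p. F p \<partial>(lborel \<Otimes>\<^sub>M lborel))"
proof -
  define \<alpha> where "\<alpha> = - s / (1 + c)"
  have c1: "1 + c \<noteq> 0" using cs by auto
  have e1: "1 + \<alpha> * s = c"
  proof -
    have ss: "s * s = (1 - c) * (1 + c)" using cs(1) by (simp add: power2_eq_square algebra_simps)
    have "\<alpha> * s = - (s * s) / (1 + c)" by (simp add: \<alpha>_def)
    also have "\<dots> = c - 1" using c1 by (simp add: ss)
    finally show ?thesis by simp
  qed
  have e2: "2 * \<alpha> + \<alpha> * \<alpha> * s = - s"
  proof -
    have "2 * \<alpha> + \<alpha> * \<alpha> * s = \<alpha> * (1 + (1 + \<alpha> * s))" by (simp add: algebra_simps)
    also have "\<dots> = \<alpha> * (1 + c)" using e1 by simp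
    also have "\<dots> = - s" using c1 by (simp add: \<alpha>_def)
    finally show ?thesis .
  qed
  define S1 where "S1 = (\<lambda>p::'a \<times> 'a. (fst p + \<alpha> *\<^sub>R snd p, snd p))"
  define S2 where "S2 = (\<lambda>p::'a \<times> 'a. (fst p, snd p + s *\<^sub>R fst p))"
  have [measurable]: "S1 \<in> borel_measurable borel" "S2 \<in> borel_measurable borel"
    unfolding S1_def S2_def by ((intro borel_measurable_continuous_onI continuous_intros)+)
  have comp: "(c *\<^sub>R fst p - s *\<^sub>R snd p, s *\<^sub>R fst p + c *\<^sub>R snd p) = S1 (S2 (S1 p))" for p
  proof -
    have "S1 (S2 (S1 p)) = ((1 + \<alpha> * s) *\<^sub>R fst p + (2 * \<alpha> + \<alpha> * \<alpha> * s) *\<^sub>R snd p,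
                           s *\<^sub>R fst p + (1 + \<alpha> * s) *\<^sub>R snd p)"
      by (simp add: S1_def S2_def algebra_simps scaleR_add_right) (metis mult_2_right scaleR_add_left)
    then show ?thesis using e1 e2 by simp
  qed
  have "(\<integral>\<^sup>+p. F (c *\<^sub>R fst p - s *\<^sub>R snd p, s *\<^sub>R fst p + c *\<^sub>R snd p) \<partial>(lborel \<Otimes>\<^sub>M lborel))
      = (\<integral>\<^sup>+p. (\<lambda>q. F (S1 (S2 q))) (S1 p) \<partial>(lborel \<Otimes>\<^sub>M lborel))"
    by (simp add: comp)
  also have "\<dots> = (\<integral>\<^sup>+p. F (S1 (S2 p)) \<partial>(lborel \<Otimes>\<^sub>M lborel))"
  proof -
    have "(\<lambda>q. F (S1 (S2 q))) \<in> borel_measurable borel" by measurable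
    from shear1[OF this, of \<alpha>] show ?thesis by (simp add: S1_def)
  qed
  also have "\<dots> = (\<integral>\<^sup>+p. F (S1 p) \<partial>(lborel \<Otimes>\<^sub>M lborel))"
  proof -
    have "(\<lambda>q. F (S1 q)) \<in> borel_measurable borel" by measurable
    from shear2[OF this, of s] show ?thesis by (simp add: S2_def)
  qed
  also have "\<dots> = (\<integral>\<^sup>+p. F p \<partial>(lborel \<Otimes>\<^sub>M lborel))"
    unfolding S1_def by (rule shear1) simp
  finally show ?thesis .
qed


definition gd :: "complex \<Rightarrow> real" where "gd z = exp (- (cmod z)\<^sup>2) / pi"

lemma gd_measurable[measurable]: "gd \<in> borel_measurable borel"
  unfolding gd_def by measurable

lemma gd_nonneg: "gd z \<ge> 0" by (simp add: gd_def)

lemma cgauss_gd: "cgauss = density lborel (\<lambda>z. ennreal (gd z))"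
  by (simp add: cgauss_def gd_def)

lemma gd_Complex: "gd (Complex x y) = normal_density 0 (1 / sqrt 2) x * normal_density 0 (1 / sqrt 2) y"
proof -
  have "gd (Complex x y) = exp (- x\<^sup>2 - y\<^sup>2) / pi"
    by (simp add: gd_def cmod_power2)
  also have "\<dots> = (exp (- x\<^sup>2) / sqrt pi) * (exp (- y\<^sup>2) / sqrt pi)"
    by (simp add: exp_diff exp_minus field_simps)
  also have "\<dots> = normal_density 0 (1 / sqrt 2) x * normal_density 0 (1 / sqrt 2) y"
    by (simp add: normal_density_def power_divide real_sqrt_mult)
  finally show ?thesis .
qed

lemma nn_integral_nd: "(\<integral>\<^sup>+x. ennreal (normal_density 0 (1 / sqrt 2) x) \<partial>lborel) = 1"
proof -
  interpret prob_space "density lborel (\<lambda>x. ennreal (normal_density 0 (1 / sqrt 2) x))"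
    by (rule prob_space_normal_density) simp
  from emeasure_space_1 show ?thesis by (simp add: emeasure_density)
qed

lemma prob_space_cgauss: "prob_space cgauss"
proof
  have "emeasure cgauss (space cgauss) = (\<integral>\<^sup>+z. ennreal (gd z) \<partial>lborel)"
    by (simp add: cgauss_gd emeasure_density)
  also have "\<dots> = (\<integral>\<^sup>+p. ennreal (gd (Complex (fst p) (snd p))) \<partial>(lborel \<Otimes>\<^sub>M lborel))"
    by (rule nn_integral_complex) measurable
  also have "\<dots> = (\<integral>\<^sup>+x. \<integral>\<^sup>+y. ennreal (normal_density 0 (1 / sqrt 2) x) * ennreal (normal_density 0 (1 / sqrt 2) y) \<partial>lborel \<partial>lborel)"
    by (subst lborel.nn_integral_fst[symmetric]) (auto simp: gd_Complex ennreal_mult')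
  also have "\<dots> = (\<integral>\<^sup>+x. ennreal (normal_density 0 (1 / sqrt 2) x) * 1 \<partial>lborel)"
    by (subst nn_integral_cmult) (auto simp: nn_integral_nd)
  also have "\<dots> = 1" by (simp add: nn_integral_nd)
  finally show "emeasure cgauss (space cgauss) = 1" .
qed

interpretation cg: prob_space cgauss by (rule prob_space_cgauss)

lemma rot_complex1:
  fixes f :: "complex \<Rightarrow> ennreal" and w :: complex
  assumes [measurable]: "f \<in> borel_measurable borel" and w: "cmod w = 1" "w \<noteq> -1"
  shows "(\<integral>\<^sup>+z. f (w * z) \<partial>lborel) = (\<integral>\<^sup>+z. f z \<partial>lborel)"
proof -
  define F where "F = (\<lambda>p. f (Complex (fst p) (snd p)))"
  have mC: "(\<lambda>p. Complex (fst p) (snd p)) \<in> borel_measurable (borel :: (real \<times> real) measure)"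
  proof -
    have "(\<lambda>p. Complex (fst p) (snd p)) = (\<lambda>p::real\<times>real. complex_of_real (fst p) + \<i> * complex_of_real (snd p))"
      by (auto simp: complex_eq_iff)
    moreover have "(\<lambda>p::real\<times>real. complex_of_real (fst p) + \<i> * complex_of_real (snd p)) \<in> borel_measurable borel"
      by (intro borel_measurable_continuous_onI continuous_intros)
    ultimately show ?thesis by simp
  qed
  have [measurable]: "F \<in> borel_measurable borel" unfolding F_def using mC by measurable
  have cs: "(Re w)\<^sup>2 + (Im w)\<^sup>2 = 1" using w(1) cmod_power2[of w] by simp
  have cn: "Re w \<noteq> -1"
  proof
    assume "Re w = -1"
    with cs have "Im w = 0" by simp
    with \<open>Re w = -1\<close> w(2) show False by (simp add: complex_eq_iff)
  qed
  have eq: "w * Complex x y = Complex (Re w * x - Im w * y) (Im w * x + Re w * y)" for x y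
    by (simp add: complex_eq_iff)
  have "(\<integral>\<^sup>+z. f (w * z) \<partial>lborel) = (\<integral>\<^sup>+p. F (Re w *\<^sub>R fst p - Im w *\<^sub>R snd p, Im w *\<^sub>R fst p + Re w *\<^sub>R snd p) \<partial>(lborel \<Otimes>\<^sub>M lborel))"
    by (subst nn_integral_complex) (auto simp: F_def eq)
  also have "\<dots> = (\<integral>\<^sup>+p. F p \<partial>(lborel \<Otimes>\<^sub>M lborel))"
    by (rule rot_inv[OF _ cs cn]) simp
  also have "\<dots> = (\<integral>\<^sup>+z. f z \<partial>lborel)"
    by (subst nn_integral_complex) (auto simp: F_def)
  finally show ?thesis .
qed

lemma rot_complex:
  fixes f :: "complex \<Rightarrow> ennreal" and w :: complex
  assumes [measurable]: "f \<in> borel_measurable borel" and w: "cmod w = 1"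
  shows "(\<integral>\<^sup>+z. f (w * z) \<partial>lborel) = (\<integral>\<^sup>+z. f z \<partial>lborel)"
proof -
  define r where "r = csqrt w"
  have r1: "cmod r = 1" using w by (simp add: r_def)
  have rn: "r \<noteq> -1"
  proof
    assume "r = -1"
    then have "Re r = -1" by simp
    moreover have "Re r \<ge> 0" unfolding r_def by (rule Re_csqrt)
    ultimately show False by linarith
  qed
  have wr: "w = r * r" unfolding r_def by (metis power2_csqrt power2_eq_square)
  have [measurable]: "(\<lambda>u. f (r * u)) \<in> borel_measurable borel" by measurable
  have "(\<integral>\<^sup>+z. f (w * z) \<partial>lborel) = (\<integral>\<^sup>+z. (\<lambda>u. f (r * u)) (r * z) \<partial>lborel)"
    by (simp add: wr mult.assoc)
  also have "\<dots> = (\<integral>\<^sup>+z. f (r * z) \<partial>lborel)"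
    by (rule rot_complex1[OF _ r1 rn]) simp
  also have "\<dots> = (\<integral>\<^sup>+z. f z \<partial>lborel)"
    by (rule rot_complex1[OF _ r1 rn]) simp
  finally show ?thesis .
qed

lemma gd_rot: "cmod w = 1 \<Longrightarrow> gd (w * z) = gd z"
  by (simp add: gd_def norm_mult)

lemma cgauss_phase:
  assumes w: "cmod w = 1"
  shows "distr cgauss borel (\<lambda>z. w * z) = cgauss"
proof (rule measure_eqI)
  fix A :: "complex set" assume "A \<in> sets (distr cgauss borel (\<lambda>z. w * z))"
  then have [measurable]: "A \<in> sets borel" by simp
  have [measurable]: "(\<lambda>z. w * z) -` A \<in> sets borel"
    by (rule measurable_sets_borel[of "\<lambda>z. w * z" borel A]) auto
  have "emeasure (distr cgauss borel (\<lambda>z. w * z)) A = emeasure cgauss ((\<lambda>z. w * z) -` A)"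
    by (subst emeasure_distr) auto
  also have "\<dots> = (\<integral>\<^sup>+z. (\<lambda>u. ennreal (gd u) * indicator A u) (w * z) \<partial>lborel)"
    by (subst cgauss_gd, subst emeasure_density) (auto simp: gd_rot[OF w] intro!: nn_integral_cong split: split_indicator)
  also have "\<dots> = (\<integral>\<^sup>+u. ennreal (gd u) * indicator A u \<partial>lborel)"
    by (rule rot_complex[OF _ w]) simp
  also have "\<dots> = emeasure cgauss A"
    by (simp add: cgauss_gd emeasure_density)
  finally show "emeasure (distr cgauss borel (\<lambda>z. w * z)) A = emeasure cgauss A" .
qed simp


lemma cgauss_pair: "cgauss \<Otimes>\<^sub>M cgauss = density (lborel \<Otimes>\<^sub>M lborel) (\<lambda>p. ennreal (gd (fst p)) * ennreal (gd (snd p)))"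
proof -
  have "cgauss \<Otimes>\<^sub>M cgauss = density (lborel \<Otimes>\<^sub>M lborel) (\<lambda>(x, y). ennreal (gd x) * ennreal (gd y))"
    unfolding cgauss_gd
    by (rule pair_measure_density) (auto simp: cgauss_gd[symmetric] cg.sigma_finite_measure_axioms lborel.sigma_finite_measure_axioms)
  then show ?thesis by (simp add: split_beta')
qed

lemma norm_rot2:
  fixes c s :: real and u v :: complex
  assumes "c\<^sup>2 + s\<^sup>2 = 1"
  shows "(cmod (of_real c * u + of_real s * v))\<^sup>2 + (cmod (of_real (- s) * u + of_real c * v))\<^sup>2 = (cmod u)\<^sup>2 + (cmod v)\<^sup>2"
proof -
  have "(cmod (of_real c * u + of_real s * v))\<^sup>2 + (cmod (of_real (- s) * u + of_real c * v))\<^sup>2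
      = (c\<^sup>2 + s\<^sup>2) * ((Re u)\<^sup>2 + (Im u)\<^sup>2 + (Re v)\<^sup>2 + (Im v)\<^sup>2)"
    by (simp only: cmod_power2) (simp add: power2_eq_square algebra_simps)
  then show ?thesis using assms by (simp add: cmod_power2)
qed

lemma gd_prod_rot:
  fixes c s :: real and u v :: complex
  assumes "c\<^sup>2 + s\<^sup>2 = 1"
  shows "gd (of_real c * u + of_real s * v) * gd (of_real (- s) * u + of_real c * v) = gd u * gd v"
proof -
  have "gd (of_real c * u + of_real s * v) * gd (of_real (- s) * u + of_real c * v)
      = exp (- ((cmod (of_real c * u + of_real s * v))\<^sup>2 + (cmod (of_real (- s) * u + of_real c * v))\<^sup>2)) / (pi * pi)"
    by (simp add: gd_def exp_add[symmetric])
  also have "\<dots> = exp (- ((cmod u)\<^sup>2 + (cmod v)\<^sup>2)) / (pi * pi)"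
    using norm_rot2[OF assms] by simp
  also have "\<dots> = gd u * gd v" by (simp add: gd_def exp_add[symmetric])
  finally show ?thesis .
qed

lemma cgauss_rot2:
  fixes c s :: real
  assumes cs: "c\<^sup>2 + s\<^sup>2 = 1" "c \<noteq> -1"
  shows "distr (cgauss \<Otimes>\<^sub>M cgauss) borel (\<lambda>p. of_real c * fst p + of_real s * snd p) = cgauss"
proof (rule measure_eqI)
  fix A :: "complex set" assume "A \<in> sets (distr (cgauss \<Otimes>\<^sub>M cgauss) borel (\<lambda>p. of_real c * fst p + of_real s * snd p))"
  then have [measurable]: "A \<in> sets borel" by simp
  define G where "G = (\<lambda>p::complex \<times> complex. ennreal (gd (fst p)) * ennreal (gd (snd p)))"
  have [measurable]: "G \<in> borel_measurable borel" unfolding G_def borel_prod[symmetric]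
    by measurable
  define H where "H = (\<lambda>q::complex \<times> complex. G q * indicator A (fst q))"
  have Hm[measurable]: "H \<in> borel_measurable borel" unfolding H_def G_def borel_prod[symmetric]
    by measurable
  have cs': "c\<^sup>2 + (- s)\<^sup>2 = 1" using cs by simp
  have T: "(\<lambda>p::complex \<times> complex. of_real c * fst p + of_real s * snd p) \<in> measurable (cgauss \<Otimes>\<^sub>M cgauss) borel"
    by measurable
  have sp: "space (cgauss \<Otimes>\<^sub>M cgauss) = UNIV" by (simp add: space_pair_measure)
  have T2: "(\<lambda>p::complex \<times> complex. of_real c * fst p + of_real s * snd p) \<in> measurable (borel \<Otimes>\<^sub>M borel) borel"
    by measurable
  have [measurable]: "(\<lambda>p::complex \<times> complex. of_real c * fst p + of_real s * snd p) -` A \<in> sets (borel \<Otimes>\<^sub>M borel)"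
    using measurable_sets[OF T2 \<open>A \<in> sets borel\<close>] by (simp add: space_pair_measure)
  have "emeasure (distr (cgauss \<Otimes>\<^sub>M cgauss) borel (\<lambda>p. of_real c * fst p + of_real s * snd p)) A
      = emeasure (cgauss \<Otimes>\<^sub>M cgauss) ((\<lambda>p. of_real c * fst p + of_real s * snd p) -` A)"
    by (subst emeasure_distr[OF T]) (auto simp: sp)
  also have "\<dots> = (\<integral>\<^sup>+p. G p * indicator ((\<lambda>p. of_real c * fst p + of_real s * snd p) -` A) p \<partial>(lborel \<Otimes>\<^sub>M lborel))"
    unfolding cgauss_pair G_def[symmetric]
    by (rule emeasure_density) (auto simp: G_def)
  also have "\<dots> = (\<integral>\<^sup>+p. H (c *\<^sub>R fst p - (- s) *\<^sub>R snd p, (- s) *\<^sub>R fst p + c *\<^sub>R snd p) \<partial>(lborel \<Otimes>\<^sub>M lborel))"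
  proof (intro nn_integral_cong)
    fix p :: "complex \<times> complex"
    have "G (c *\<^sub>R fst p - (- s) *\<^sub>R snd p, (- s) *\<^sub>R fst p + c *\<^sub>R snd p) = G p"
      using gd_prod_rot[OF cs(1), of "fst p" "snd p"]
      by (simp add: G_def scaleR_conv_of_real ennreal_mult''[symmetric] gd_nonneg)
    then show "G p * indicator ((\<lambda>p. of_real c * fst p + of_real s * snd p) -` A) p = H (c *\<^sub>R fst p - (- s) *\<^sub>R snd p, (- s) *\<^sub>R fst p + c *\<^sub>R snd p)"
      by (simp add: H_def scaleR_conv_of_real indicator_def)
  qed
  also have "\<dots> = (\<integral>\<^sup>+p. H p \<partial>(lborel \<Otimes>\<^sub>M lborel))"
    by (rule rot_inv[OF Hm cs' cs(2)])
  also have "\<dots> = (\<integral>\<^sup>+p. G p * indicator (A \<times> UNIV) p \<partial>(lborel \<Otimes>\<^sub>M lborel))"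
    by (intro nn_integral_cong) (auto simp: H_def indicator_def)
  also have "\<dots> = emeasure (cgauss \<Otimes>\<^sub>M cgauss) (A \<times> UNIV)"
    unfolding cgauss_pair G_def[symmetric]
    by (rule emeasure_density[symmetric]) (auto simp: G_def)
  also have "\<dots> = emeasure cgauss A"
    using cg.emeasure_space_1 by (simp add: cg.emeasure_pair_measure_Times)
  finally show "emeasure (distr (cgauss \<Otimes>\<^sub>M cgauss) borel (\<lambda>p. of_real c * fst p + of_real s * snd p)) A = emeasure cgauss A" .
qed simp


definition phase :: "complex \<Rightarrow> complex" where
  "phase a = (if a = 0 then 1 else a / of_real (cmod a))"

lemma phase_norm: "cmod (phase a) = 1"
  by (simp add: phase_def norm_divide)

lemma phase_mult: "of_real (cmod a) * phase a = a"
  by (simp add: phase_def)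

lemma cgauss_pair_phase:
  "distr (cgauss \<Otimes>\<^sub>M cgauss) (borel \<Otimes>\<^sub>M borel) (\<lambda>(x, y). (w1 * x, w2 * y)) = cgauss \<Otimes>\<^sub>M cgauss"
  if "cmod w1 = 1" "cmod w2 = 1"
proof -
  have "distr cgauss borel (\<lambda>x. w1 * x) \<Otimes>\<^sub>M distr cgauss borel (\<lambda>x. w2 * x)
      = distr (cgauss \<Otimes>\<^sub>M cgauss) (borel \<Otimes>\<^sub>M borel) (\<lambda>(x, y). (w1 * x, w2 * y))"
    by (rule pair_measure_distr) (auto simp: cgauss_phase that cg.sigma_finite_measure_axioms)
  then show ?thesis by (simp add: cgauss_phase that)
qed

lemma cgauss_two:
  fixes a b :: complex
  assumes ab: "(cmod a)\<^sup>2 + (cmod b)\<^sup>2 = 1"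
  shows "distr (cgauss \<Otimes>\<^sub>M cgauss) borel (\<lambda>p. a * fst p + b * snd p) = cgauss"
proof -
  have m1: "(\<lambda>(x, y). (phase a * x, phase b * y)) \<in> measurable (cgauss \<Otimes>\<^sub>M cgauss) (borel \<Otimes>\<^sub>M borel)"
    by measurable
  have m2: "(\<lambda>p. of_real (cmod a) * fst p + of_real (cmod b) * snd p) \<in> measurable (borel \<Otimes>\<^sub>M borel) (borel :: complex measure)"
    by measurable
  have "distr (cgauss \<Otimes>\<^sub>M cgauss) borel (\<lambda>p. a * fst p + b * snd p)
      = distr (distr (cgauss \<Otimes>\<^sub>M cgauss) (borel \<Otimes>\<^sub>M borel) (\<lambda>(x, y). (phase a * x, phase b * y))) borel
          (\<lambda>p. of_real (cmod a) * fst p + of_real (cmod b) * snd p)"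
    by (subst distr_distr[OF m2 m1]) (simp add: comp_def split_beta mult.assoc[symmetric] phase_mult)
  also have "\<dots> = distr (cgauss \<Otimes>\<^sub>M cgauss) borel (\<lambda>p. of_real (cmod a) * fst p + of_real (cmod b) * snd p)"
    by (simp add: cgauss_pair_phase phase_norm)
  also have "\<dots> = cgauss"
    by (rule cgauss_rot2) (use ab in \<open>auto, smt (verit) norm_ge_zero\<close>)
  finally show ?thesis .
qed


lemma prob_space_PiM_cgauss: "prob_space (\<Pi>\<^sub>M i\<in>I. cgauss)"
  by (rule prob_space_PiM) (rule prob_space_cgauss)

lemma distr_sets_cong: "sets N = sets N' \<Longrightarrow> distr M N f = distr M N' f"
  by (rule distr_cong) auto

lemma meas_PiM_sum[measurable]:
  "(\<lambda>v. \<Sum>i\<in>I. a i * v i) \<in> measurable (\<Pi>\<^sub>M i\<in>I. cgauss) (borel :: complex measure)"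
proof -
  have "(\<lambda>v. v i) \<in> measurable (\<Pi>\<^sub>M i\<in>I. cgauss) (borel :: complex measure)" if "i \<in> I" for i
    using measurable_component_singleton[OF that, of "\<lambda>_. cgauss"] by (simp add: measurable_cong_sets[OF refl sets_cgauss])
  then show ?thesis by (intro borel_measurable_sum borel_measurable_times) auto
qed

lemma cgauss_sum:
  assumes "finite I" "I \<noteq> {}" "(\<Sum>i\<in>I. (cmod (a i))\<^sup>2) = 1"
  shows "distr (\<Pi>\<^sub>M i\<in>I. cgauss) borel (\<lambda>v. \<Sum>i\<in>I. a i * v i) = cgauss"
  using assms
proof (induction I arbitrary: a rule: finite_ne_induct)
  case (singleton i)
  then have ai: "cmod (a i) = 1" by (simp add: power2_eq_1_iff) (smt (verit) norm_ge_zero)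
  have m1: "(\<lambda>v. v i) \<in> measurable (\<Pi>\<^sub>M j\<in>{i}. cgauss) borel"
    using measurable_component_singleton[of i "{i}" "\<lambda>_. cgauss"] by (simp add: measurable_cong_sets[OF refl sets_cgauss])
  have m2: "(\<lambda>z. a i * z) \<in> measurable (borel :: complex measure) borel" by measurable
  have "distr (\<Pi>\<^sub>M j\<in>{i}. cgauss) borel (\<lambda>v. \<Sum>j\<in>{i}. a j * v j) = distr (distr (\<Pi>\<^sub>M j\<in>{i}. cgauss) borel (\<lambda>v. v i)) borel (\<lambda>z. a i * z)"
    by (subst distr_distr[OF m2 m1]) (simp add: comp_def)
  also have "distr (\<Pi>\<^sub>M j\<in>{i}. cgauss) borel (\<lambda>v. v i) = cgauss"
    using distr_PiM_component[of "{i}" "\<lambda>_. cgauss" i] prob_space_cgauss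
    by (simp add: distr_sets_cong[of borel cgauss])
  finally show ?case by (simp add: cgauss_phase ai)
next
  case (insert i I)
  interpret PI: prob_space "\<Pi>\<^sub>M j\<in>I. cgauss" by (rule prob_space_PiM_cgauss)
  define r where "r = sqrt (\<Sum>j\<in>I. (cmod (a j))\<^sup>2)"
  have r0: "r \<ge> 0" unfolding r_def by (intro real_sqrt_ge_zero sum_nonneg) auto
  have rsq: "r\<^sup>2 = (\<Sum>j\<in>I. (cmod (a j))\<^sup>2)" unfolding r_def by (intro real_sqrt_pow2 sum_nonneg) auto
  have ai_r: "(cmod (a i))\<^sup>2 + r\<^sup>2 = 1" using insert.prems insert.hyps rsq by simp
  have PiI: "(\<Pi>\<^sub>M j\<in>insert i I. cgauss) = distr (cgauss \<Otimes>\<^sub>M (\<Pi>\<^sub>M j\<in>I. cgauss)) (\<Pi>\<^sub>M j\<in>insert i I. cgauss) (\<lambda>(x, X). X(i := x))"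
    using distr_pair_PiM_eq_PiM[of I "\<lambda>_. cgauss" i] prob_space_cgauss by simp
  have mupd: "(\<lambda>(x, X). X(i := x)) \<in> measurable (cgauss \<Otimes>\<^sub>M (\<Pi>\<^sub>M j\<in>I. cgauss)) (\<Pi>\<^sub>M j\<in>insert i I. cgauss)"
  proof -
    have "(\<lambda>p. (snd p)(i := fst p)) \<in> measurable (cgauss \<Otimes>\<^sub>M (\<Pi>\<^sub>M j\<in>I. cgauss)) (\<Pi>\<^sub>M j\<in>insert i I. cgauss)"
      by (rule measurable_fun_upd[where J=I]) auto
    then show ?thesis by (simp add: split_beta')
  qed
  have sum_upd: "(\<Sum>j\<in>insert i I. a j * (X(i := x)) j) = a i * x + (\<Sum>j\<in>I. a j * X j)" for X x
    using insert.hyps by (simp add: sum.insert) (intro sum.cong, auto)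
  have step1: "distr (\<Pi>\<^sub>M j\<in>insert i I. cgauss) borel (\<lambda>v. \<Sum>j\<in>insert i I. a j * v j)
      = distr (cgauss \<Otimes>\<^sub>M (\<Pi>\<^sub>M j\<in>I. cgauss)) borel (\<lambda>p. a i * fst p + (\<Sum>j\<in>I. a j * snd p j))"
    by (subst PiI, subst distr_distr[OF meas_PiM_sum mupd]) (simp add: comp_def split_beta sum_upd del: fun_upd_apply)
  show ?case
  proof (cases "r = 0")
    case True
    then have "(\<Sum>j\<in>I. (cmod (a j))\<^sup>2) = 0" using rsq by simp
    then have a0: "\<forall>j\<in>I. a j = 0" using insert.hyps by (subst (asm) sum_nonneg_eq_0_iff) auto
    have ai: "cmod (a i) = 1" using ai_r True by (simp add: power2_eq_1_iff) (smt (verit) norm_ge_zero)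
    have mf: "fst \<in> measurable (cgauss \<Otimes>\<^sub>M (\<Pi>\<^sub>M j\<in>I. cgauss)) cgauss" by simp
    have m2: "(\<lambda>z. a i * z) \<in> measurable cgauss borel" by measurable
    have "distr (cgauss \<Otimes>\<^sub>M (\<Pi>\<^sub>M j\<in>I. cgauss)) borel (\<lambda>p. a i * fst p + (\<Sum>j\<in>I. a j * snd p j))
        = distr (distr (cgauss \<Otimes>\<^sub>M (\<Pi>\<^sub>M j\<in>I. cgauss)) cgauss fst) borel (\<lambda>z. a i * z)"
      by (subst distr_distr[OF m2 mf]) (simp add: comp_def a0)
    also have "\<dots> = cgauss" by (simp add: PI.distr_pair_fst cgauss_phase ai)
    finally show ?thesis using step1 by simp
  next
    case False
    then have rp: "r > 0" using r0 by simp
    define b where "b j = a j / of_real r" for j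
    have bsum: "(\<Sum>j\<in>I. (cmod (b j))\<^sup>2) = 1"
      using rp rsq by (simp add: b_def norm_divide power_divide sum_divide_distrib[symmetric]) (metis power_not_zero less_irrefl)
    have IH: "distr (\<Pi>\<^sub>M j\<in>I. cgauss) borel (\<lambda>v. \<Sum>j\<in>I. b j * v j) = cgauss"
      by (rule insert.IH[OF bsum])
    have eqs: "a i * fst p + (\<Sum>j\<in>I. a j * snd p j) = a i * fst p + of_real r * (\<Sum>j\<in>I. b j * snd p j)" for p :: "complex \<times> (_ \<Rightarrow> complex)"
      using rp by (simp add: b_def sum_distrib_left)
    have mT: "(\<lambda>(x, X). (x, \<Sum>j\<in>I. b j * X j)) \<in> measurable (cgauss \<Otimes>\<^sub>M (\<Pi>\<^sub>M j\<in>I. cgauss)) (borel \<Otimes>\<^sub>M borel)"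
      by measurable
    have m2: "(\<lambda>p. a i * fst p + of_real r * snd p) \<in> measurable (borel \<Otimes>\<^sub>M borel) (borel :: complex measure)"
      by measurable
    have pd: "distr cgauss borel (\<lambda>x. x) \<Otimes>\<^sub>M distr (\<Pi>\<^sub>M j\<in>I. cgauss) borel (\<lambda>v. \<Sum>j\<in>I. b j * v j)
        = distr (cgauss \<Otimes>\<^sub>M (\<Pi>\<^sub>M j\<in>I. cgauss)) (borel \<Otimes>\<^sub>M borel) (\<lambda>(x, X). (x, \<Sum>j\<in>I. b j * X j))"
      by (rule pair_measure_distr) (auto simp: IH cg.sigma_finite_measure_axioms)
    have "distr cgauss borel (\<lambda>x. x) = cgauss" by (rule distr_id2) simp
    with pd IH have pd': "distr (cgauss \<Otimes>\<^sub>M (\<Pi>\<^sub>M j\<in>I. cgauss)) (borel \<Otimes>\<^sub>M borel) (\<lambda>(x, X). (x, \<Sum>j\<in>I. b j * X j)) = cgauss \<Otimes>\<^sub>M cgauss"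
      by simp
    have "distr (cgauss \<Otimes>\<^sub>M (\<Pi>\<^sub>M j\<in>I. cgauss)) borel (\<lambda>p. a i * fst p + (\<Sum>j\<in>I. a j * snd p j))
        = distr (distr (cgauss \<Otimes>\<^sub>M (\<Pi>\<^sub>M j\<in>I. cgauss)) (borel \<Otimes>\<^sub>M borel) (\<lambda>(x, X). (x, \<Sum>j\<in>I. b j * X j))) borel (\<lambda>p. a i * fst p + of_real r * snd p)"
      by (subst distr_distr[OF m2 mT]) (simp add: comp_def split_beta eqs)
    also have "\<dots> = cgauss"
      unfolding pd' using ai_r r0 by (intro cgauss_two) simp
    finally show ?thesis using step1 by simp
  qed
qed


lemma borel_measurable_vec_lambda[measurable]:
  fixes f :: "'i::finite \<Rightarrow> 'a \<Rightarrow> 'b::euclidean_space"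
  assumes "\<And>i. f i \<in> borel_measurable M"
  shows "(\<lambda>x. \<chi> i. f i x) \<in> borel_measurable M"
proof (subst borel_measurable_euclidean_space, intro ballI)
  fix b :: "'b ^ 'i" assume "b \<in> Basis"
  then obtain i u where b: "b = axis i u" "u \<in> Basis" unfolding Basis_vec_def by auto
  have "(\<lambda>x. f i x \<bullet> u) \<in> borel_measurable M" using assms by measurable
  then show "(\<lambda>x. (\<chi> i. f i x) \<bullet> b) \<in> borel_measurable M"
    by (simp add: b inner_axis)
qed

lemma borel_measurable_vec_nth[measurable]:
  fixes f :: "'a \<Rightarrow> 'b::euclidean_space ^ 'i::finite"
  assumes "f \<in> borel_measurable M"
  shows "(\<lambda>x. f x $ i) \<in> borel_measurable M"
proof -
  have "(\<lambda>v::'b ^ 'i. v $ i) \<in> borel_measurable borel"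
    by (intro borel_measurable_continuous_onI continuous_intros)
  from measurable_compose[OF assms this] show ?thesis .
qed

lemma meas_PiM_comp:
  fixes g :: "'k \<Rightarrow> complex"
  assumes "k \<in> I"
  shows "(\<lambda>f. f k) \<in> measurable (\<Pi>\<^sub>M i\<in>I. cgauss) (borel :: complex measure)"
  using measurable_component_singleton[OF assms, of "\<lambda>_. cgauss"] by (simp add: measurable_cong_sets[OF refl sets_cgauss])

lemma meas_toVec[measurable]:
  "(\<lambda>f. \<chi> i. f i) \<in> measurable (\<Pi>\<^sub>M i\<in>UNIV. cgauss) (borel :: (complex ^ 'i::finite) measure)"
  by (intro borel_measurable_vec_lambda meas_PiM_comp) simp

lemma meas_toMat[measurable]:
  "(\<lambda>f. \<chi> i j. f (i, j)) \<in> measurable (\<Pi>\<^sub>M ij\<in>UNIV. cgauss) (borel :: (complex ^ 'c::finite ^ 'r::finite) measure)"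
  by (intro borel_measurable_vec_lambda meas_PiM_comp) simp

lemma prob_space_iid_cgauss_vec: "prob_space (iid_cgauss_vec :: (complex ^ 'i::finite) measure)"
  unfolding iid_cgauss_vec_def by (rule prob_space.prob_space_distr[OF prob_space_PiM_cgauss meas_toVec])

lemma prob_space_iid_cgauss_mat: "prob_space (iid_cgauss_mat :: (complex ^ 'c::finite ^ 'r::finite) measure)"
  unfolding iid_cgauss_mat_def by (rule prob_space.prob_space_distr[OF prob_space_PiM_cgauss meas_toMat])

lemma sets_iid_cgauss_vec[measurable_cong, simp]: "sets iid_cgauss_vec = sets borel"
  by (simp add: iid_cgauss_vec_def)

lemma sets_iid_cgauss_mat[measurable_cong, simp]: "sets iid_cgauss_mat = sets borel"
  by (simp add: iid_cgauss_mat_def)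

definition Tm :: "complex ^ ('q::finite \<times> 'm::finite) \<Rightarrow> complex ^ 'q ^ 'm" where
  "Tm s = (\<chi> m q. s $ (q, m))"

lemma meas_Tm[measurable]: "Tm \<in> borel_measurable borel"
  unfolding Tm_def by measurable

lemma lemmaA: "distr (iid_cgauss_vec :: (complex ^ ('q::finite \<times> 'm::finite)) measure) borel Tm = iid_cgauss_mat"
proof -
  have pp: "\<And>i. i \<in> (UNIV :: ('q \<times> 'm) set) \<Longrightarrow> prob_space cgauss" by (rule prob_space_cgauss)
  have reidx: "distr (\<Pi>\<^sub>M r\<in>(UNIV :: ('q \<times> 'm) set). cgauss) (\<Pi>\<^sub>M ij\<in>(UNIV :: ('m \<times> 'q) set). cgauss) (\<lambda>\<omega>. \<lambda>ij\<in>UNIV. \<omega> (prod.swap ij))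
      = (\<Pi>\<^sub>M ij\<in>(UNIV :: ('m \<times> 'q) set). cgauss)"
    using distr_PiM_reindex[of UNIV "\<lambda>_. cgauss" prod.swap UNIV] prob_space_cgauss by simp
  have mr: "(\<lambda>\<omega>. \<lambda>ij\<in>UNIV. \<omega> (prod.swap ij)) \<in> measurable (\<Pi>\<^sub>M r\<in>(UNIV :: ('q \<times> 'm) set). cgauss) (\<Pi>\<^sub>M ij\<in>(UNIV :: ('m \<times> 'q) set). cgauss)"
    by (intro measurable_restrict measurable_component_singleton) simp
  have "distr (iid_cgauss_vec :: (complex ^ ('q \<times> 'm)) measure) borel Tm
      = distr (\<Pi>\<^sub>M r\<in>(UNIV :: ('q \<times> 'm) set). cgauss) borel (\<lambda>f. \<chi> i j. f (j, i))"
    unfolding iid_cgauss_vec_def by (subst distr_distr) (auto simp: comp_def Tm_def)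
  also have "\<dots> = distr (distr (\<Pi>\<^sub>M r\<in>(UNIV :: ('q \<times> 'm) set). cgauss) (\<Pi>\<^sub>M ij\<in>(UNIV :: ('m \<times> 'q) set). cgauss) (\<lambda>\<omega>. \<lambda>ij\<in>UNIV. \<omega> (prod.swap ij))) borel (\<lambda>f. \<chi> i j. f (i, j))"
    by (subst distr_distr[OF meas_toMat mr]) (simp add: comp_def)
  also have "\<dots> = iid_cgauss_mat"
    unfolding reidx iid_cgauss_mat_def ..
  finally show ?thesis .
qed


definition Lm :: "complex ^ 'q::finite ^ 'n::finite \<Rightarrow> complex ^ 'n ^ ('q \<times> 'm::finite) \<Rightarrow> complex ^ 'n ^ 'm" where
  "Lm P W = (\<chi> m n. \<Sum>q\<in>UNIV. P $ n $ q * W $ (q, m) $ n)"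

lemma meas_Lm[measurable]: "Lm P \<in> borel_measurable borel"
  unfolding Lm_def by measurable

lemma norm_vec_sq: "(norm (v :: complex ^ 'q::finite))\<^sup>2 = (\<Sum>q\<in>UNIV. (cmod (v $ q))\<^sup>2)"
  by (simp add: norm_vec_def L2_set_def sum_nonneg)

lemma indep_coords:
  "prob_space.indep_vars (\<Pi>\<^sub>M k\<in>(UNIV :: 'k set). cgauss) (\<lambda>_. cgauss) (\<lambda>k x. x k) UNIV"
proof -
  interpret O: prob_space "\<Pi>\<^sub>M k\<in>(UNIV :: 'k set). cgauss" by (rule prob_space_PiM_cgauss)
  have rv: "(\<lambda>x. x k) \<in> measurable (\<Pi>\<^sub>M k\<in>(UNIV :: 'k set). cgauss) cgauss" for k
    by (rule measurable_component_singleton) simp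
  have d1: "distr (\<Pi>\<^sub>M k\<in>(UNIV :: 'k set). cgauss) (\<Pi>\<^sub>M k\<in>UNIV. cgauss) (\<lambda>x. \<lambda>k\<in>UNIV. x k) = (\<Pi>\<^sub>M k\<in>(UNIV :: 'k set). cgauss)"
  proof -
    have "distr (\<Pi>\<^sub>M k\<in>(UNIV :: 'k set). cgauss) (\<Pi>\<^sub>M k\<in>UNIV. cgauss) (\<lambda>x. \<lambda>k\<in>UNIV. x k)
        = distr (\<Pi>\<^sub>M k\<in>(UNIV :: 'k set). cgauss) (\<Pi>\<^sub>M k\<in>UNIV. cgauss) (\<lambda>x. x)"
      by (intro distr_cong) (auto simp: space_PiM)
    then show ?thesis by simp
  qed
  have d2: "(\<Pi>\<^sub>M k\<in>(UNIV :: 'k set). distr (\<Pi>\<^sub>M k\<in>(UNIV :: 'k set). cgauss) cgauss (\<lambda>x. x k)) = (\<Pi>\<^sub>M k\<in>(UNIV :: 'k set). cgauss)"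
    by (intro PiM_cong refl distr_PiM_component) (auto simp: prob_space_cgauss)
  show ?thesis
    by (subst O.indep_vars_iff_distr_eq_PiM) (auto simp: rv d1 d2)
qed

lemma lemmaB:
  fixes P :: "complex ^ 'q::finite ^ 'n::finite"
  assumes P: "\<And>i. norm (P $ i) = 1"
  shows "distr (iid_cgauss_mat :: (complex ^ 'n ^ ('q \<times> 'm::finite)) measure) borel (Lm P) = iid_cgauss_mat"
proof -
  let ?\<Omega> = "\<Pi>\<^sub>M k\<in>(UNIV :: (('q \<times> 'm) \<times> 'n) set). cgauss"
  interpret O: prob_space ?\<Omega> by (rule prob_space_PiM_cgauss)
  interpret PP: product_prob_space "\<lambda>_::(('q \<times> 'm) \<times> 'n). cgauss" UNIV
    by (rule product_prob_spaceI) (rule prob_space_cgauss)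
  define B :: "'m \<times> 'n \<Rightarrow> (('q \<times> 'm) \<times> 'n) set" where "B j = range (\<lambda>q. ((q, fst j), snd j))" for j
  define a :: "'m \<times> 'n \<Rightarrow> ('q \<times> 'm) \<times> 'n \<Rightarrow> complex" where "a j k = P $ snd j $ fst (fst k)" for j k
  define X where "X j \<omega> = (\<Sum>k\<in>B j. a j k * \<omega> k)" for j and \<omega> :: "('q \<times> 'm) \<times> 'n \<Rightarrow> complex"
  have injB: "inj (\<lambda>q. ((q, m), n) :: ('q \<times> 'm) \<times> 'n)" for m n by (auto intro: injI)
  have Bfin: "finite (B j)" for j by (simp add: B_def)
  have Bne: "B j \<noteq> {}" for j by (simp add: B_def)
  have disj: "disjoint_family_on B UNIV"
    unfolding disjoint_family_on_def B_def by auto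
  have sumB: "(\<Sum>k\<in>B (m, n). g k) = (\<Sum>q\<in>UNIV. g ((q, m), n))" for m n and g :: "('q \<times> 'm) \<times> 'n \<Rightarrow> complex"
    unfolding B_def by (simp add: sum.reindex[OF injB])
  have sumBr: "(\<Sum>k\<in>B (m, n). g k) = (\<Sum>q\<in>UNIV. g ((q, m), n))" for m n and g :: "('q \<times> 'm) \<times> 'n \<Rightarrow> real"
    unfolding B_def by (simp add: sum.reindex[OF injB])
  have i2: "O.indep_vars (\<lambda>j. \<Pi>\<^sub>M k\<in>B j. cgauss) (\<lambda>j \<omega>. restrict (\<lambda>k. \<omega> k) (B j)) UNIV"
    by (rule O.indep_vars_restrict[OF indep_coords]) (auto simp: disj)
  have i3: "O.indep_vars (\<lambda>_. cgauss) (\<lambda>j \<omega>. (\<lambda>v. \<Sum>k\<in>B j. a j k * v k) (restrict (\<lambda>k. \<omega> k) (B j))) UNIV"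
    by (rule O.indep_vars_compose2[OF i2]) (simp add: measurable_cong_sets[OF refl sets_cgauss])
  have i4: "O.indep_vars (\<lambda>_. cgauss) X UNIV"
    using i3 by (rule O.indep_vars_cong[THEN iffD1, rotated -1]) (auto simp: X_def fun_eq_iff intro!: sum.cong)
  have rvX: "X j \<in> measurable ?\<Omega> cgauss" for j
    using i4 unfolding O.indep_vars_def by (cases j) auto
  have marg: "distr ?\<Omega> cgauss (X j) = cgauss" for j
  proof -
    have mr: "(\<lambda>x. restrict x (B j)) \<in> measurable ?\<Omega> (\<Pi>\<^sub>M k\<in>B j. cgauss)"
      by (rule measurable_restrict_subset) simp
    have mY: "(\<lambda>v. \<Sum>k\<in>B j. a j k * v k) \<in> measurable (\<Pi>\<^sub>M k\<in>B j. cgauss) cgauss"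
      by (simp add: measurable_cong_sets[OF refl sets_cgauss])
    have "distr ?\<Omega> cgauss (X j) = distr (distr ?\<Omega> (\<Pi>\<^sub>M k\<in>B j. cgauss) (\<lambda>x. restrict x (B j))) cgauss (\<lambda>v. \<Sum>k\<in>B j. a j k * v k)"
      by (subst distr_distr[OF mY mr]) (auto simp: comp_def X_def intro!: distr_cong sum.cong)
    also have "\<dots> = distr (\<Pi>\<^sub>M k\<in>B j. cgauss) cgauss (\<lambda>v. \<Sum>k\<in>B j. a j k * v k)"
      by (subst PP.distr_PiM_restrict_finite) (auto simp: Bfin)
    also have "\<dots> = distr (\<Pi>\<^sub>M k\<in>B j. cgauss) borel (\<lambda>v. \<Sum>k\<in>B j. a j k * v k)"
      by (rule distr_sets_cong) simp
    also have "\<dots> = cgauss"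
    proof (rule cgauss_sum[OF Bfin Bne])
      obtain m n where j: "j = (m, n)" by (cases j)
      have "(\<Sum>k\<in>B j. (cmod (a j k))\<^sup>2) = (\<Sum>q\<in>UNIV. (cmod (P $ n $ q))\<^sup>2)"
        unfolding j by (subst sumBr) (simp add: a_def)
      also have "\<dots> = (norm (P $ n))\<^sup>2" by (rule norm_vec_sq[symmetric])
      also have "\<dots> = 1" by (simp add: P)
      finally show "(\<Sum>k\<in>B j. (cmod (a j k))\<^sup>2) = 1" .
    qed
    finally show ?thesis .
  qed
  have joint: "distr ?\<Omega> (\<Pi>\<^sub>M j\<in>UNIV. cgauss) (\<lambda>x. \<lambda>j\<in>UNIV. X j x) = (\<Pi>\<^sub>M j\<in>(UNIV :: ('m \<times> 'n) set). cgauss)"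
    using i4 by (subst (asm) O.indep_vars_iff_distr_eq_PiM) (auto simp: rvX marg)
  have mJ: "(\<lambda>x. \<lambda>j\<in>UNIV. X j x) \<in> measurable ?\<Omega> (\<Pi>\<^sub>M j\<in>(UNIV :: ('m \<times> 'n) set). cgauss)"
    by (intro measurable_restrict rvX)
  have eqf: "Lm P (\<chi> i j. f (i, j)) = (\<chi> i j. (\<lambda>j\<in>UNIV. X j f) (i, j))" for f
    by (simp add: Lm_def X_def a_def sumB)
  have "distr (iid_cgauss_mat :: (complex ^ 'n ^ ('q \<times> 'm)) measure) borel (Lm P)
      = distr ?\<Omega> borel (\<lambda>f. Lm P (\<chi> i j. f (i, j)))"
    unfolding iid_cgauss_mat_def by (subst distr_distr) (auto simp: comp_def)
  also have "\<dots> = distr (distr ?\<Omega> (\<Pi>\<^sub>M j\<in>(UNIV :: ('m \<times> 'n) set). cgauss) (\<lambda>x. \<lambda>j\<in>UNIV. X j x)) borel (\<lambda>f. \<chi> i j. f (i, j))"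
    by (subst distr_distr[OF meas_toMat mJ]) (simp add: comp_def eqf)
  also have "\<dots> = iid_cgauss_mat"
    unfolding joint iid_cgauss_mat_def ..
  finally show ?thesis .
qed


lemma meas_matmul[measurable]:
  fixes f :: "'a \<Rightarrow> complex ^ 'k::finite ^ 'i::finite" and g :: "'a \<Rightarrow> complex ^ 'j::finite ^ 'k"
  assumes [measurable]: "f \<in> borel_measurable M" "g \<in> borel_measurable M"
  shows "(\<lambda>x. f x ** g x) \<in> borel_measurable M"
  unfolding matrix_matrix_mult_def by measurable

lemma meas_diag[measurable]:
  fixes f :: "'a \<Rightarrow> complex ^ 'n::finite"
  assumes [measurable]: "f \<in> borel_measurable M"
  shows "(\<lambda>x. diag_mat (f x)) \<in> borel_measurable M"
proof -
  have "(\<lambda>x. (if i = j then f x $ i else 0)) \<in> borel_measurable M" for i j :: 'n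
    by (cases "i = j") simp_all
  then show ?thesis unfolding diag_mat_def by (intro borel_measurable_vec_lambda)
qed

lemma alg_identity:
  fixes P :: "complex ^ 'q::finite ^ 'n::finite" and x :: "complex ^ 'n"
    and s :: "complex ^ ('q \<times> 'm::finite)" and W :: "complex ^ 'n ^ ('q \<times> 'm)"
  shows "Lm P ((\<chi> r c. s $ r * x $ c) + W) = Tm s ** transpose P ** diag_mat x + Lm P W"
  by (simp add: vec_eq_iff Lm_def Tm_def matrix_matrix_mult_def transpose_def diag_mat_def
      algebra_simps sum.distrib sum_distrib_right sum_distrib_left if_distrib sum.delta' cong: if_cong)


lemma channel_eq:
  fixes P :: "complex ^ 'q::finite ^ 'n::finite" and \<mu> :: "(complex ^ 'n) measure"
  assumes P: "\<And>i. norm (P $ i) = 1" and \<mu>: "input_law \<mu>"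
  shows "distr (channel2 \<mu> :: ((complex ^ 'n) \<times> (complex ^ 'n ^ ('q \<times> 'm::finite))) measure) (borel \<Otimes>\<^sub>M borel)
            (\<lambda>(x, Y). (x, Lm P Y)) = (channel1 P \<mu> :: ((complex ^ 'n) \<times> (complex ^ 'n ^ 'm)) measure)"
proof -
  have smu[measurable_cong]: "sets \<mu> = sets borel" and pmu: "prob_space \<mu>"
    using \<mu> by (auto simp: input_law_def)
  let ?V = "iid_cgauss_vec :: (complex ^ ('q \<times> 'm)) measure"
  let ?W2 = "iid_cgauss_mat :: (complex ^ 'n ^ ('q \<times> 'm)) measure"
  let ?SM = "iid_cgauss_mat :: (complex ^ 'q ^ 'm) measure"
  let ?WM = "iid_cgauss_mat :: (complex ^ 'n ^ 'm) measure"
  interpret SM: prob_space ?SM by (rule prob_space_iid_cgauss_mat)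
  interpret WM: prob_space ?WM by (rule prob_space_iid_cgauss_mat)
  interpret SW: prob_space "?SM \<Otimes>\<^sub>M ?WM" by (rule prob_space_pair) (unfold_locales)
  define G2 where "G2 = (\<lambda>(x :: complex ^ 'n, s :: complex ^ ('q \<times> 'm), W :: complex ^ 'n ^ ('q \<times> 'm)). (x, (\<chi> r c. s $ r * x $ c) + W))"
  define F where "F = (\<lambda>(x :: complex ^ 'n, Y :: complex ^ 'n ^ ('q \<times> 'm)). (x, Lm P Y))"
  define K where "K = (\<lambda>(s :: complex ^ ('q \<times> 'm), W :: complex ^ 'n ^ ('q \<times> 'm)). (Tm s, Lm P W))"
  define H where "H = (\<lambda>(x :: complex ^ 'n, y). (x, K y))"
  define G1 where "G1 = (\<lambda>(x :: complex ^ 'n, S :: complex ^ 'q ^ 'm, W :: complex ^ 'n ^ 'm). (x, S ** transpose P ** diag_mat x + W))"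
  have mG2: "G2 \<in> measurable (\<mu> \<Otimes>\<^sub>M (?V \<Otimes>\<^sub>M ?W2)) (borel \<Otimes>\<^sub>M borel)"
    unfolding G2_def by measurable
  have mF: "F \<in> measurable (borel \<Otimes>\<^sub>M borel) (borel \<Otimes>\<^sub>M borel)"
    unfolding F_def by measurable
  have mK: "K \<in> measurable (?V \<Otimes>\<^sub>M ?W2) (borel \<Otimes>\<^sub>M borel)"
    unfolding K_def by measurable
  have mH: "H \<in> measurable (\<mu> \<Otimes>\<^sub>M (?V \<Otimes>\<^sub>M ?W2)) (borel \<Otimes>\<^sub>M (borel \<Otimes>\<^sub>M borel))"
    unfolding H_def K_def by measurable
  have mG1: "G1 \<in> measurable (borel \<Otimes>\<^sub>M (borel \<Otimes>\<^sub>M borel)) (borel \<Otimes>\<^sub>M borel)"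
    unfolding G1_def by measurable
  have FG: "F \<circ> G2 = G1 \<circ> H"
    by (auto simp: fun_eq_iff F_def G2_def G1_def H_def K_def alg_identity)
  have K_eq: "distr (?V \<Otimes>\<^sub>M ?W2) (borel \<Otimes>\<^sub>M borel) K = ?SM \<Otimes>\<^sub>M ?WM"
  proof -
    have "distr ?V borel Tm \<Otimes>\<^sub>M distr ?W2 borel (Lm P) = distr (?V \<Otimes>\<^sub>M ?W2) (borel \<Otimes>\<^sub>M borel) K"
      unfolding K_def by (rule pair_measure_distr) (auto simp: lemmaB[OF P] WM.sigma_finite_measure_axioms)
    then show ?thesis by (simp add: lemmaA lemmaB[OF P])
  qed
  have H_eq: "distr (\<mu> \<Otimes>\<^sub>M (?V \<Otimes>\<^sub>M ?W2)) (borel \<Otimes>\<^sub>M (borel \<Otimes>\<^sub>M borel)) H = \<mu> \<Otimes>\<^sub>M (?SM \<Otimes>\<^sub>M ?WM)"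
  proof -
    have "distr \<mu> borel (\<lambda>x. x) \<Otimes>\<^sub>M distr (?V \<Otimes>\<^sub>M ?W2) (borel \<Otimes>\<^sub>M borel) K = distr (\<mu> \<Otimes>\<^sub>M (?V \<Otimes>\<^sub>M ?W2)) (borel \<Otimes>\<^sub>M (borel \<Otimes>\<^sub>M borel)) H"
      unfolding H_def by (rule pair_measure_distr) (auto simp: mK K_eq SW.sigma_finite_measure_axioms)
    moreover have "distr \<mu> borel (\<lambda>x. x) = \<mu>" by (rule distr_id2) (simp add: smu)
    ultimately show ?thesis by (simp add: K_eq)
  qed
  have "distr (channel2 \<mu> :: ((complex ^ 'n) \<times> (complex ^ 'n ^ ('q \<times> 'm))) measure) (borel \<Otimes>\<^sub>M borel) (\<lambda>(x, Y). (x, Lm P Y))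
      = distr (distr (\<mu> \<Otimes>\<^sub>M (?V \<Otimes>\<^sub>M ?W2)) (borel \<Otimes>\<^sub>M borel) G2) (borel \<Otimes>\<^sub>M borel) F"
    by (simp add: channel2_def G2_def F_def)
  also have "\<dots> = distr (\<mu> \<Otimes>\<^sub>M (?V \<Otimes>\<^sub>M ?W2)) (borel \<Otimes>\<^sub>M borel) (G1 \<circ> H)"
    by (subst distr_distr[OF mF mG2]) (simp add: FG)
  also have "\<dots> = distr (distr (\<mu> \<Otimes>\<^sub>M (?V \<Otimes>\<^sub>M ?W2)) (borel \<Otimes>\<^sub>M (borel \<Otimes>\<^sub>M borel)) H) (borel \<Otimes>\<^sub>M borel) G1"
    by (subst distr_distr[OF mG1 mH]) simp
  also have "\<dots> = channel1 P \<mu>"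
    by (simp add: H_eq channel1_def G1_def)
  finally show ?thesis .
qed


lemma prob_space_channel2:
  fixes \<mu> :: "(complex ^ 'n::finite) measure"
  assumes \<mu>: "input_law \<mu>"
  shows "prob_space (channel2 \<mu> :: ((complex ^ 'n) \<times> (complex ^ 'n ^ ('q::finite \<times> 'm::finite))) measure)"
proof -
  have smu[measurable_cong]: "sets \<mu> = sets borel" and pmu: "prob_space \<mu>"
    using \<mu> by (auto simp: input_law_def)
  let ?V = "iid_cgauss_vec :: (complex ^ ('q \<times> 'm)) measure"
  let ?W2 = "iid_cgauss_mat :: (complex ^ 'n ^ ('q \<times> 'm)) measure"
  interpret V: prob_space ?V by (rule prob_space_iid_cgauss_vec)
  interpret W2: prob_space ?W2 by (rule prob_space_iid_cgauss_mat)
  interpret VW: prob_space "?V \<Otimes>\<^sub>M ?W2" by (rule prob_space_pair) (unfold_locales)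
  interpret mu: prob_space \<mu> by (rule pmu)
  interpret A: prob_space "\<mu> \<Otimes>\<^sub>M (?V \<Otimes>\<^sub>M ?W2)" by (rule prob_space_pair) (unfold_locales)
  have m: "(\<lambda>(x :: complex ^ 'n, s :: complex ^ ('q \<times> 'm), W :: complex ^ 'n ^ ('q \<times> 'm)). (x, (\<chi> r c. s $ r * x $ c) + W))
      \<in> measurable (\<mu> \<Otimes>\<^sub>M (?V \<Otimes>\<^sub>M ?W2)) (borel \<Otimes>\<^sub>M borel)"
    by measurable
  show ?thesis unfolding channel2_def by (rule A.prob_space_distr[OF m])
qed

theorem mainTheorem3:
  fixes P :: "complex ^ 'q::finite ^ 'n::finite"
  assumes "CARD('q) \<le> CARD('n)"
    and "\<And>i. norm (P $ i) = 1"
  shows "(\<forall>\<mu>. input_law \<mu> \<longrightarrow>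
            mutual_info (channel1 P \<mu> :: ((complex ^ 'n) \<times> (complex ^ 'n ^ 'm::finite)) measure)
            \<le> mutual_info (channel2 \<mu> :: ((complex ^ 'n) \<times> (complex ^ 'n ^ ('q \<times> 'm))) measure))
       \<and> (\<forall>\<rho>>0. capacity (channel1 P :: _ \<Rightarrow> ((complex ^ 'n) \<times> (complex ^ 'n ^ 'm)) measure) \<rho>
                 \<le> capacity (channel2 :: _ \<Rightarrow> ((complex ^ 'n) \<times> (complex ^ 'n ^ ('q \<times> 'm))) measure) \<rho>)"
proof -
  have part1: "mutual_info (channel1 P \<mu> :: ((complex ^ 'n) \<times> (complex ^ 'n ^ 'm)) measure)
            \<le> mutual_info (channel2 \<mu> :: ((complex ^ 'n) \<times> (complex ^ 'n ^ ('q \<times> 'm))) measure)"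
    if \<mu>: "input_law \<mu>" for \<mu>
  proof -
    have "(channel1 P \<mu> :: ((complex ^ 'n) \<times> (complex ^ 'n ^ 'm)) measure)
        = distr (channel2 \<mu> :: ((complex ^ 'n) \<times> (complex ^ 'n ^ ('q \<times> 'm))) measure) (borel \<Otimes>\<^sub>M borel) (\<lambda>(x, Y). (x, Lm P Y))"
      by (rule channel_eq[OF assms(2) \<mu>, symmetric])
    also have "mutual_info \<dots> \<le> mutual_info (channel2 \<mu> :: ((complex ^ 'n) \<times> (complex ^ 'n ^ ('q \<times> 'm))) measure)"
      by (rule mi_dpi[OF prob_space_channel2[OF \<mu>]]) (auto simp: channel2_def)
    finally show ?thesis .
  qed
  show ?thesis
  proof (intro conjI allI impI)
    fix \<mu> :: "(complex ^ 'n) measure" assume "input_law \<mu>"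
    then show "mutual_info (channel1 P \<mu> :: ((complex ^ 'n) \<times> (complex ^ 'n ^ 'm)) measure)
            \<le> mutual_info (channel2 \<mu> :: ((complex ^ 'n) \<times> (complex ^ 'n ^ ('q \<times> 'm))) measure)"
      by (rule part1)
  next
    fix \<rho> :: real assume "\<rho> > 0"
    show "capacity (channel1 P :: _ \<Rightarrow> ((complex ^ 'n) \<times> (complex ^ 'n ^ 'm)) measure) \<rho>
                 \<le> capacity (channel2 :: _ \<Rightarrow> ((complex ^ 'n) \<times> (complex ^ 'n ^ ('q \<times> 'm))) measure) \<rho>"
      unfolding capacity_def by (rule SUP_mono) (auto intro: part1)
  qed
qed


end
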